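(* Let $0 \leq r < 1$. Define $\delta_k \in \{0,1\}$ for $k \geq 1$ inductively by $\delta_k = 1$ if $\frac{\sum_{i=1}^{k-1} 2i\delta_i + 2k}{k(k+1)} \leq r$, and $\delta_k = 0$ otherwise. For $k \geq 1$ let $w^{\langle k \rangle}$ be the word consisting of $2k$ copies of the letter $1 - \delta_k$, and let $w = w^{\langle 1 \rangle} w^{\langle 2 \rangle} w^{\langle 3 \rangle} \cdots$ (infinite concatenation). Then $\lim_{n \to \infty} |P(w^{(n)})|/n = r$.
   Context: $w^{(n)}$ denotes the initial subword of length $n$ of $w$. For a binary word $u = u_1 \cdots u_\ell$ of length $\ell$, $P(u)$ is the set of indices $i \geq 2$ such that at least one of the following holds: (i) $\ell \geq i$ and $u_{i-1} u_i = 00$; (ii) $\ell \geq i+2$ and $u_{i-1} u_i u_{i+1} u_{i+2} = 0100$; (iii) $\ell \geq i+3$ and $u_{i-1} \cdots u_{i+3} = 01010$. *)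

theory Defs
  imports Complex_Main
begin

text \<open>The sequence delta_k (k >= 1), defined by strong recursion; delta r 0 is a dummy 0.\<close>
function delta :: "real \<Rightarrow> nat \<Rightarrow> nat" where
  "delta r k = (if k = 0 then 0
     else if (real (\<Sum>i\<in>{1..<k}. 2 * i * delta r i) + 2 * real k) / (real k * real (k + 1)) \<le> r
          then 1 else 0)"
  by auto
termination by (relation "measure snd") auto

definition wblock :: "real \<Rightarrow> nat \<Rightarrow> nat list" where
  "wblock r k = replicate (2 * k) (1 - delta r k)"

text \<open>Prefix of length n of the infinite word w = w<1> w<2> w<3> ...;
  the first n blocks already have total length n(n+1) >= n.\<close>
definition wpref :: "real \<Rightarrow> nat \<Rightarrow> nat list" where
  "wpref r n = take n (concat (map (wblock r) [1..<Suc n]))"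

text \<open>P(u), with 1-based letters u_i = u ! (i - 1).\<close>
definition Pset :: "nat list \<Rightarrow> nat set" where
  "Pset u = {i. 2 \<le> i \<and>
     ((i \<le> length u \<and> u ! (i - 2) = 0 \<and> u ! (i - 1) = 0)
    \<or> (i + 2 \<le> length u \<and> u ! (i - 2) = 0 \<and> u ! (i - 1) = 1 \<and> u ! i = 0 \<and> u ! (i + 1) = 0)
    \<or> (i + 3 \<le> length u \<and> u ! (i - 2) = 0 \<and> u ! (i - 1) = 1 \<and> u ! i = 0
        \<and> u ! (i + 1) = 1 \<and> u ! (i + 2) = 0))}"

end

theory Submission imports Defs "HOL-Real_Asymp.Real_Asymp" begin
declare delta.simps[simp del]

lemma delta_le1: "delta r k \<le> 1"
  by (subst delta.simps) auto

definition L :: "real \<Rightarrow> nat \<Rightarrow> nat list" where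
  "L r m = concat (map (wblock r) [1..<Suc m])"

lemma L_0: "L r 0 = []" by (simp add: L_def)
lemma L_Suc: "L r (Suc m) = L r m @ wblock r (Suc m)" by (simp add: L_def)
lemma len_L: "length (L r m) = m*(m+1)"
  by (induction m) (auto simp: L_0 L_Suc wblock_def)
lemma L_prefix: "\<exists>xs. L r (m+d) = L r m @ xs"
proof (induction d)
  case 0 then show ?case by simp
next
  case (Suc d) then obtain xs where "L r (m+d) = L r m @ xs" by blast
  then show ?case by (simp add: L_Suc)
qed
lemma L_take: assumes "n \<le> a*(a+1)" "n \<le> b*(b+1)"
  shows "take n (L r a) = take n (L r b)"
proof -
  have *: "take n (L r a) = take n (L r b)" if "a \<le> b" "n \<le> a*(a+1)" for a b
  proof -
    have ab: "a + (b - a) = b" using that by simp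
    obtain xs where "L r b = L r a @ xs" using L_prefix[of r a "b-a"] unfolding ab by blast
    then show ?thesis using that by (simp add: len_L)
  qed
  show ?thesis
  proof (cases "a \<le> b")
    case True then show ?thesis using *[of a b] assms(1) by blast
  next
    case False then have "b \<le> a" by simp
    then show ?thesis using *[of b a] assms(2) by metis
  qed
qed

lemma wpref_L: "wpref r n = take n (L r n)" by (simp add: wpref_def L_def)
lemma len_wpref: "length (wpref r n) = n" by (simp add: wpref_L len_L)

definition blk :: "nat \<Rightarrow> nat" where "blk j = (LEAST k. j < k*(k+1))"

lemma blk_eq: assumes "(k-1)*k \<le> j" "j < k*(k+1)" shows "blk j = k"
  unfolding blk_def
proof (rule Least_equality)
  show "j < k*(k+1)" by fact
  fix y assume y: "j < y*(y+1)"
  show "k \<le> y"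
  proof (rule ccontr)
    assume "\<not> k \<le> y" hence h1: "y+1 \<le> k" and h2: "y \<le> k-1" by auto
    have "y*(y+1) \<le> (k-1)*k" by (rule mult_le_mono[OF h2 h1])
    with assms y show False by linarith
  qed
qed

lemma blk_props: "(blk j - 1)*blk j \<le> j \<and> j < blk j*(blk j+1)"
proof -
  have ex: "j < (j+1)*((j+1)+1)" by simp
  have a: "j < blk j*(blk j+1)" unfolding blk_def by (rule LeastI[of _ "j+1"]) (rule ex)
  have b: "(blk j - 1)*blk j \<le> j"
  proof (cases "blk j")
    case 0 then show ?thesis by simp
  next
    case (Suc k)
    have "\<not> j < k*(k+1)" using not_less_Least[of k "\<lambda>k. j < k*(k+1)"] Suc
      unfolding blk_def by simp
    then show ?thesis using Suc by (simp add: mult.commute)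
  qed
  show ?thesis using a b by simp
qed

lemma L_nth: "j < m*(m+1) \<Longrightarrow> L r m ! j = 1 - delta r (blk j)"
proof (induction m)
  case 0 then show ?case by simp
next
  case (Suc m)
  show ?case
  proof (cases "j < m*(m+1)")
    case True then show ?thesis using Suc by (simp add: L_Suc nth_append len_L)
  next
    case False
    have "blk j = Suc m" by (rule blk_eq) (use False Suc.prems in auto)
    moreover have "j - m*(m+1) < 2 * Suc m" using False Suc.prems by (simp add: algebra_simps)
    moreover have "L r (Suc m) ! j = wblock r (Suc m) ! (j - m*(m+1))"
      using False by (simp only: L_Suc nth_append len_L if_False)
    ultimately show ?thesis unfolding wblock_def by (simp only: nth_replicate)
  qed
qed

lemma wpref_nth: "j < n \<Longrightarrow> wpref r n ! j = 1 - delta r (blk j)"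
proof -
  assume j: "j < n"
  have "n \<le> n*(n+1)" by simp
  hence "j < n*(n+1)" using j by linarith
  then show ?thesis using j by (simp add: wpref_L L_nth)
qed

definition S :: "real \<Rightarrow> nat \<Rightarrow> nat" where
  "S r m = (\<Sum>i\<in>{1..<Suc m}. 2*i*delta r i)"

lemma S_Suc: "S r (Suc m) = S r m + 2*(Suc m)*delta r (Suc m)"
  by (simp add: S_def)

lemma filter_repl: "length (filter (\<lambda>x. x = 0) (replicate N (1 - delta r k))) = N * delta r k"
  using delta_le1[of r k] by (cases "delta r k") auto

lemma zeros_L: "length (filter (\<lambda>x. x = 0) (L r m)) = S r m"
proof (induction m)
  case 0 then show ?case by (simp add: L_0 S_def)
next
  case (Suc m) then show ?case
    by (simp only: L_Suc S_Suc wblock_def filter_append length_append filter_repl)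
qed

lemma delta_Suc: "delta r (Suc m) = (if (real (S r m) + 2 * real (Suc m)) / (real (Suc m) * real (Suc m + 1)) \<le> r then 1 else 0)"
  by (subst delta.simps) (simp add: S_def)

lemma S_upper: assumes "0 \<le> r" shows "real (S r m) \<le> r * m * (m+1)"
proof (induction m)
  case 0 then show ?case by (simp add: S_def)
next
  case (Suc m)
  show ?case
  proof (cases "(real (S r m) + 2 * real (Suc m)) / (real (Suc m) * real (Suc m + 1)) \<le> r")
    case True
    hence "real (S r m) + 2 * real (Suc m) \<le> r * (real (Suc m) * real (Suc m + 1))"
      by (simp add: divide_le_eq)
    then show ?thesis using True by (simp add: S_Suc delta_Suc algebra_simps)
  next
    case False
    have "r * m * (m+1) \<le> r * (Suc m) * (Suc m + 1)"
      using assms by (intro mult_mono) auto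
    then show ?thesis using False Suc by (simp add: S_Suc delta_Suc)
  qed
qed

lemma S_lower: assumes "r \<le> 1" shows "real (S r m) \<ge> r * m * (m+1) - 2 * (m+1)"
proof (induction m)
  case 0 then show ?case by (simp add: S_def)
next
  case (Suc m)
  show ?case
  proof (cases "(real (S r m) + 2 * real (Suc m)) / (real (Suc m) * real (Suc m + 1)) \<le> r")
    case True
    have "r * (Suc m) * (Suc m + 1) - r * m * (m+1) = 2 * r * (m+1)" by (simp add: algebra_simps)
    moreover have "r * real (m+1) \<le> 1 * real (m+1)" by (rule mult_right_mono) (use assms in auto)
    hence "2 * r * (m+1) \<le> 2 * (m+1)" by (simp add: algebra_simps)
    ultimately show ?thesis using True Suc by (simp add: S_Suc delta_Suc algebra_simps)
  next
    case False
    hence "real (S r m) + 2 * real (Suc m) > r * (real (Suc m) * real (Suc m + 1))"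
      by (simp add: divide_le_eq)
    then show ?thesis using False by (simp add: S_Suc delta_Suc algebra_simps)
  qed
qed

lemma Z_bounds:
  assumes "m*(m+1) \<le> n" "n \<le> (m+1)*(m+2)"
  shows "S r m \<le> length (filter (\<lambda>x. x = 0) (wpref r n)) \<and>
         length (filter (\<lambda>x. x = 0) (wpref r n)) \<le> S r (Suc m)"
proof -
  have "n \<le> n*(n+1)" by simp
  hence "wpref r n = take n (L r (Suc m))"
    unfolding wpref_L by (rule L_take) (use assms in simp)
  also have "\<dots> = L r m @ take (n - m*(m+1)) (wblock r (Suc m))"
    using assms(1) by (simp add: L_Suc len_L)
  finally have "length (filter (\<lambda>x. x = 0) (wpref r n)) = S r m + min (n - m*(m+1)) (2 * Suc m) * delta r (Suc m)"
    by (simp only: filter_append length_append zeros_L wblock_def take_replicate filter_repl)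
  moreover have "min (n - m*(m+1)) (2 * Suc m) * delta r (Suc m) \<le> 2 * Suc m * delta r (Suc m)"
    by (intro mult_le_mono1) simp
  ultimately show ?thesis by (simp add: S_Suc)
qed

lemma Pset_fin: "Pset u \<subseteq> {..length u}"
  unfolding Pset_def by auto

lemma zeros_card: "length (filter (\<lambda>x. x = 0) u) = card {j. j < length u \<and> u ! j = 0}"
  by (rule length_filter_conv_card)

lemma card_upper: "card (Pset u) \<le> length (filter (\<lambda>x. x = 0) u)"
proof -
  have "Pset u \<subseteq> (\<lambda>j. j+2) ` {j. j < length u \<and> u ! j = 0}"
  proof
    fix i assume "i \<in> Pset u"
    hence "2 \<le> i" "i \<le> length u" "u ! (i-2) = 0" unfolding Pset_def by auto
    thus "i \<in> (\<lambda>j. j+2) ` {j. j < length u \<and> u ! j = 0}"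
      by (intro image_eqI[of _ _ "i-2"]) auto
  qed
  hence "card (Pset u) \<le> card ((\<lambda>j. j+2) ` {j. j < length u \<and> u ! j = 0})"
    by (intro card_mono) auto
  also have "\<dots> \<le> card {j. j < length u \<and> u ! j = 0}" by (rule card_image_le) auto
  finally show ?thesis by (simp add: zeros_card)
qed

lemma card_lower:
  assumes "m*(m+1) \<le> n" "n < (m+1)*(m+2)"
  shows "length (filter (\<lambda>x. x = 0) (wpref r n)) \<le> card (Pset (wpref r n)) + Suc m"
proof -
  define u where "u = wpref r n"
  have lu: "length u = n" by (simp add: u_def len_wpref)
  have un: "\<And>j. j < n \<Longrightarrow> u ! j = 1 - delta r (blk j)" by (simp add: u_def wpref_nth)
  define A where "A = {j. j < n \<and> u ! j = 0}"
  define P' where "P' = {j. j+1 < n \<and> u ! j = 0 \<and> u ! (j+1) = 0}"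
  define E where "E = insert (n-1) ((\<lambda>k. k*(k+1)-1) ` {1..m})"
  have "(\<lambda>j. j+2) ` P' \<subseteq> Pset u"
    unfolding P'_def Pset_def using lu by auto
  hence "card ((\<lambda>j. j+2) ` P') \<le> card (Pset u)"
    by (intro card_mono) (auto intro: finite_subset[OF Pset_fin])
  moreover have "card ((\<lambda>j. j+2) ` P') = card P'" by (rule card_image) (auto simp: inj_on_def)
  ultimately have c1: "card P' \<le> card (Pset u)" by simp
  have c2: "card E \<le> Suc m"
  proof -
    have "card E \<le> Suc (card ((\<lambda>k. k*(k+1)-1) ` {1..m}))" unfolding E_def by (rule card_insert_le_m1) auto
    also have "card ((\<lambda>k. k*(k+1)-1) ` {1..m}) \<le> m" using card_image_le[of "{1..m}" "\<lambda>k. k*(k+1)-1"] by simp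
    finally show ?thesis by simp
  qed
  have "A \<subseteq> P' \<union> E"
  proof
    fix j assume "j \<in> A"
    hence j: "j < n" "u ! j = 0" by (auto simp: A_def)
    show "j \<in> P' \<union> E"
    proof (cases "j + 1 < n \<and> u ! (j+1) = 0")
      case True then show ?thesis using j by (auto simp: P'_def)
    next
      case False
      show ?thesis
      proof (cases "j + 1 < n")
        case False then show ?thesis using j by (auto simp: E_def)
      next
        case True
        with \<open>\<not> (j + 1 < n \<and> u ! (j+1) = 0)\<close> have "u ! (j+1) \<noteq> 0" by simp
        hence "delta r (blk j) \<noteq> delta r (blk (j+1))" using j un[of j] un[of "j+1"] True by auto
        hence ne: "blk j \<noteq> blk (j+1)" by metis
        define k where "k = blk j"
        have k1: "(k-1)*k \<le> j" "j < k*(k+1)" using blk_props[of j] by (auto simp: k_def)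
        have jk: "j + 1 = k*(k+1)"
        proof (rule ccontr)
          assume "j + 1 \<noteq> k*(k+1)"
          hence "j+1 < k*(k+1)" using k1 by simp
          hence "blk (j+1) = k" using k1 by (intro blk_eq) auto
          thus False using ne k_def by simp
        qed
        have "k \<ge> 1" using jk by (cases k) auto
        moreover have "k \<le> m"
        proof (rule ccontr)
          assume "\<not> k \<le> m" hence "m+1 \<le> k" "m+2 \<le> k+1" by auto
          hence "(m+1)*(m+2) \<le> k*(k+1)" by (rule mult_le_mono)
          thus False using jk True assms(2) by linarith
        qed
        ultimately have "j \<in> (\<lambda>k. k*(k+1)-1) ` {1..m}" using jk by (intro image_eqI[of _ _ k]) auto
        then show ?thesis by (simp add: E_def)
      qed
    qed
  qed
  moreover have "finite P'" unfolding P'_def by (rule finite_subset[of _ "{..<n}"]) auto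
  ultimately have "card A \<le> card (P' \<union> E)" by (intro card_mono) (auto simp: E_def)
  also have "\<dots> \<le> card P' + card E" by (rule card_Un_le)
  finally have "card A \<le> card (Pset u) + Suc m" using c1 c2 by linarith
  moreover have "length (filter (\<lambda>x. x = 0) u) = card A" by (simp add: zeros_card A_def lu)
  ultimately show ?thesis by (simp add: u_def)
qed

lemma lin_aux:
  fixes c z Sm S1 a R b t M :: real
  assumes "c \<le> z" "z \<le> c + M" "Sm \<le> z" "z \<le> S1" "a \<le> R" "R \<le> b" "t \<le> M"
    "b = a + 2*t" "S1 \<le> b" "a - 2*M \<le> Sm"
  shows "\<bar>c - R\<bar> \<le> 5*M"
  using assms by linarith

lemma main_bound:
  assumes "0 \<le> r" "r \<le> 1" "1 \<le> n"
  shows "\<bar>real (card (Pset (wpref r n))) - r * n\<bar> \<le> 5 * (sqrt n + 1)"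
proof -
  define k where "k = blk n"
  have kp: "(k-1)*k \<le> n" "n < k*(k+1)" using blk_props[of n] by (auto simp: k_def)
  have "k \<noteq> 0" using kp(2) by (cases k) auto
  then obtain m where km: "k = Suc m" by (cases k) auto
  have m1: "m*(m+1) \<le> n" using kp km by simp
  have m2: "n < (m+1)*(m+2)" using kp km by (simp add: algebra_simps)
  define c where "c = card (Pset (wpref r n))"
  define z where "z = length (filter (\<lambda>x. x = 0) (wpref r n))"
  have zb: "S r m \<le> z" "z \<le> S r (Suc m)" using Z_bounds[OF m1, of r] m2 by (auto simp: z_def)
  have cz: "c \<le> z" by (simp add: c_def z_def card_upper)
  have zc: "z \<le> c + Suc m" using card_lower[OF m1 m2, of r] by (simp add: c_def z_def)
  have Su: "real (S r (Suc m)) \<le> r * real (Suc m) * real (Suc m + 1)" by (rule S_upper[OF assms(1)])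
  have Sl: "real (S r m) \<ge> r * m * (m+1) - 2 * (m+1)" by (rule S_lower[OF assms(2)])
  have m1r: "real m * real (m+1) \<le> real n" using m1 by (metis of_nat_le_iff of_nat_mult)
  have m2r: "real n \<le> real (m+1) * real (m+2)" using m2 by (metis less_imp_le of_nat_le_iff of_nat_mult)
  have rn1: "r * (real m * real (m+1)) \<le> r * real n"
    by (rule mult_left_mono[OF m1r assms(1)])
  have rn2: "r * real n \<le> r * (real (m+1) * real (m+2))"
    by (rule mult_left_mono[OF m2r assms(1)])
  have t: "r * real (m+1) \<le> real (m+1)" using mult_right_mono[OF assms(2), of "real (m+1)"] by simp
  have id: "r * (real (m+1) * real (m+2)) = r * (real m * real (m+1)) + 2 * (r * real (m+1))"
    by (simp add: algebra_simps)
  have Su': "real (S r (Suc m)) \<le> r * (real (m+1) * real (m+2))" using Su by (simp add: algebra_simps)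
  have Sl': "real (S r m) \<ge> r * (real m * real (m+1)) - 2 * real (m+1)" using Sl by (simp add: algebra_simps)
  have "real c \<le> real z" "real z \<le> real c + real (m+1)" "real (S r m) \<le> real z" "real z \<le> real (S r (Suc m))"
    using cz zc zb by simp_all
  hence b: "\<bar>real c - r * n\<bar> \<le> 5 * real (m+1)" by (rule lin_aux) (use rn1 rn2 t id Su' Sl' in auto)
  have "real m * real m \<le> real m * real (m+1)" by (rule mult_left_mono) auto
  hence "real m * real m \<le> real n" using m1r by linarith
  hence "real m \<le> sqrt n" by (intro real_le_rsqrt) (simp add: power2_eq_square)
  then show ?thesis using b by (simp add: c_def)
qed

theorem lemma4p17:
  fixes r :: real
  assumes "0 \<le> r" and "r < 1"
  shows "(\<lambda>n. real (card (Pset (wpref r n))) / real n) \<longlonglongrightarrow> r"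
proof -
  define g where "g = (\<lambda>n::nat. 5 * (sqrt (real n) + 1) / real n)"
  have g0: "g \<longlonglongrightarrow> 0" unfolding g_def by real_asymp
  have lo: "(\<lambda>n. r - g n) \<longlonglongrightarrow> r" using tendsto_diff[OF tendsto_const g0, of r] by simp
  have hi: "(\<lambda>n. r + g n) \<longlonglongrightarrow> r" using tendsto_add[OF tendsto_const g0, of r] by simp
  have ev: "\<forall>\<^sub>F n in sequentially. \<bar>real (card (Pset (wpref r n))) / real n - r\<bar> \<le> g n"
  proof (rule eventually_sequentiallyI[of 1])
    fix n :: nat assume n: "1 \<le> n"
    have "\<bar>real (card (Pset (wpref r n))) - r * n\<bar> \<le> 5 * (sqrt n + 1)"
      using main_bound[of r n] assms n by simp
    moreover have "real (card (Pset (wpref r n))) / real n - r = (real (card (Pset (wpref r n))) - r * n) / real n"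
      using n by (simp add: field_simps)
    ultimately show "\<bar>real (card (Pset (wpref r n))) / real n - r\<bar> \<le> g n"
      using n by (simp add: g_def abs_divide divide_right_mono)
  qed
  show ?thesis
  proof (rule tendsto_sandwich[OF _ _ lo hi])
    show "\<forall>\<^sub>F n in sequentially. r - g n \<le> real (card (Pset (wpref r n))) / real n"
      using ev by eventually_elim linarith
    show "\<forall>\<^sub>F n in sequentially. real (card (Pset (wpref r n))) / real n \<le> r + g n"
      using ev by eventually_elim linarith
  qed
qed
end
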